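(* Let $\mathfrak{R}$ be either $\mathbb{F}_q$ ($q$ a prime power) or $\mathbb{Z}_k$ ($k\ge2$), with character $\chi$ as in the context. Let $C$ and $D$ be $\mathfrak{R}$-linear codes of length $n$ and $\bm{w}\in\mathfrak{R}^n$. Then (i) $\displaystyle \mathfrak{Jac}^{av}(C,D^{\perp},\bm{w};x_a:a\in\mathfrak{R}^3)=\frac{1}{|D|}\mathfrak{Jac}^{av}\Big(C,D,\bm{w};\sum_{b\in\mathfrak{R}}\chi(a_2b)x_{(a_1,b,a_3)}:a\in\mathfrak{R}^3\Big)$; (ii) $\displaystyle \mathfrak{Jac}^{av}(C^{\perp},D,\bm{w};x_a:a\in\mathfrak{R}^3)=\frac{1}{|C|}\mathfrak{Jac}^{av}\Big(C,D,\bm{w};\sum_{b\in\mathfrak{R}}\chi(a_1b)x_{(b,a_2,a_3)}:a\in\mathfrak{R}^3\Big)$; (iii) $\displaystyle \mathfrak{Jac}^{av}(C^{\perp},D^{\perp},\bm{w};x_a:a\in\mathfrak{R}^3)=\frac{1}{|C||D|}\mathfrak{Jac}^{av}\Big(C,D,\bm{w};\sum_{b_1,b_2\in\mathfrak{R}}\chi(a_1b_1+a_2b_2)x_{(b_1,b_2,a_3)}:a\in\mathfrak{R}^3\Big)$, where on each right-hand side every variable $x_{(a_1,a_2,a_3)}$ of $\mathfrak{Jac}^{av}(C,D,\bm{w};x_a:a\in\mathfrak{R}^3)$ is replaced by the indicated linear form.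
   Context: An $\mathbb{F}_q$-linear code of length $n$ is a subspace of $\mathbb{F}_q^n$; a $\mathbb{Z}_k$-linear code is an additive subgroup of $\mathbb{Z}_k^n$. $C^\perp=\{\bm{v}\in\mathfrak{R}^n : \sum_iu_iv_i=0\ \forall\bm{u}\in C\}$. The character $\chi$: if $\mathfrak{R}=\mathbb{F}_q$, $q=p^f$, fix a root $\lambda$ of a primitive irreducible polynomial of degree $f$ over $\mathbb{F}_p$, write $\alpha=\alpha_0+\alpha_1\lambda+\cdots+\alpha_{f-1}\lambda^{f-1}$ ($\alpha_i\in\mathbb{F}_p$) and set $\chi(\alpha)=\zeta_p^{\alpha_0}$; if $\mathfrak{R}=\mathbb{Z}_k$, $\chi(\alpha)=\zeta_k^{\alpha}$ ($\zeta_m$ a primitive $m$-th root of unity). For $a\in\mathfrak{R}^3$, $h_a(\bm{u},\bm{v};\bm{w})=\#\{i:(u_i,v_i,w_i)=a\}$; $\mathfrak{Jac}(C,D,\bm{w};x_a:a\in\mathfrak{R}^3)=\sum_{\bm{u}\in C,\bm{v}\in D}\prod_{a\in\mathfrak{R}^3}x_a^{h_a(\bm{u},\bm{v};\bm{w})}$. For $\sigma\in S_n$, $\bm{u}^\sigma=(u_{\sigma(1)},\dots,u_{\sigma(n)})$, $C^\sigma=\{\bm{u}^\sigma:\bm{u}\in C\}$. The average complete joint Jacobi polynomial is $\mathfrak{Jac}^{av}(C,D,\bm{w};x_a:a\in\mathfrak{R}^3)=\frac{1}{n!}\sum_{\sigma\in S_n}\mathfrak{Jac}(C^\sigma,D,\bm{w};x_a:a\in\mathfrak{R}^3)$.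 *)

theory Defs
  imports Complex_Main "HOL-Computational_Algebra.Polynomial" "HOL-Combinatorics.Permutations"
begin

definition is_field_ring :: "'r::comm_ring_1 itself \<Rightarrow> bool" where
  "is_field_ring _ \<longleftrightarrow> (\<forall>x::'r. x \<noteq> 0 \<longrightarrow> (\<exists>y. x * y = 1))"

definition prim_root_unity :: "complex \<Rightarrow> nat \<Rightarrow> bool" where
  "prim_root_unity z m \<longleftrightarrow> z ^ m = 1 \<and> (\<forall>j. 0 < j \<and> j < m \<longrightarrow> z ^ j \<noteq> 1)"

text \<open>Polynomials over the prime field F_p, viewed inside 'r via the prime subfield (range of_nat).\<close>
definition over_prime_field :: "'r::comm_ring_1 poly \<Rightarrow> bool" where
  "over_prime_field P \<longleftrightarrow> (\<forall>i. coeff P i \<in> range (of_nat :: nat \<Rightarrow> 'r))"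

definition primitive_irreducible :: "nat \<Rightarrow> nat \<Rightarrow> 'r::comm_ring_1 poly \<Rightarrow> bool" where
  "primitive_irreducible p f P \<longleftrightarrow>
     over_prime_field P \<and> degree P = f \<and>
     (\<forall>g h. over_prime_field g \<and> over_prime_field h \<and> P = g * h \<longrightarrow> degree g = 0 \<or> degree h = 0) \<and>
     (\<forall>x. poly P x = 0 \<longrightarrow> x ^ (p ^ f - 1) = 1 \<and> (\<forall>m. 0 < m \<and> m < p ^ f - 1 \<longrightarrow> x ^ m \<noteq> 1))"

text \<open>The character on F_q: alpha = alpha_0 + alpha_1 lam + ... + alpha_(f-1) lam^(f-1), chi(alpha) = zeta^alpha_0.\<close>
definition chi_Fq :: "nat \<Rightarrow> nat \<Rightarrow> 'r::comm_ring_1 \<Rightarrow> complex \<Rightarrow> 'r \<Rightarrow> complex" where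
  "chi_Fq p f lam z \<alpha> = z ^ (THE c. c < p \<and> (\<exists>cs. (\<forall>i. cs i < p) \<and>
       \<alpha> = of_nat c + (\<Sum>i=1..<f. of_nat (cs i) * lam ^ i)))"

definition Fq_character :: "nat \<Rightarrow> nat \<Rightarrow> 'r::{comm_ring_1,finite} \<Rightarrow> complex \<Rightarrow> ('r \<Rightarrow> complex) \<Rightarrow> bool" where
  "Fq_character p f lam z chi \<longleftrightarrow>
     is_field_ring TYPE('r) \<and> prime p \<and> of_nat p = (0::'r) \<and> 0 < f \<and> card (UNIV :: 'r set) = p ^ f \<and>
     (\<exists>P. primitive_irreducible p f P \<and> poly P lam = 0) \<and>
     prim_root_unity z p \<and> chi = chi_Fq p f lam z"

text \<open>The ring Z_k: a finite ring of cardinality k generated additively by 1; chi(alpha) = zeta^alpha.\<close>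
definition chi_Zk :: "nat \<Rightarrow> complex \<Rightarrow> 'r::comm_ring_1 \<Rightarrow> complex" where
  "chi_Zk k z \<alpha> = z ^ (THE j. j < k \<and> of_nat j = \<alpha>)"

definition Zk_character :: "nat \<Rightarrow> complex \<Rightarrow> ('r::{comm_ring_1,finite} \<Rightarrow> complex) \<Rightarrow> bool" where
  "Zk_character k z chi \<longleftrightarrow>
     2 \<le> k \<and> card (UNIV :: 'r set) = k \<and> surj (of_nat :: nat \<Rightarrow> 'r) \<and> prim_root_unity z k \<and> chi = chi_Zk k z"

definition vecs :: "nat \<Rightarrow> (nat \<Rightarrow> 'r::zero) set" where
  "vecs n = {u. \<forall>i. n \<le> i \<longrightarrow> u i = 0}"

definition linear_code :: "nat \<Rightarrow> (nat \<Rightarrow> 'r::comm_ring_1) set \<Rightarrow> bool" where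
  "linear_code n C \<longleftrightarrow> C \<subseteq> vecs n \<and> (\<lambda>_. 0) \<in> C \<and>
     (\<forall>u\<in>C. \<forall>v\<in>C. (\<lambda>i. u i + v i) \<in> C) \<and>
     (\<forall>c. \<forall>u\<in>C. (\<lambda>i. c * u i) \<in> C)"

definition dual_code :: "nat \<Rightarrow> (nat \<Rightarrow> 'r::comm_ring_1) set \<Rightarrow> (nat \<Rightarrow> 'r) set" where
  "dual_code n C = {v \<in> vecs n. \<forall>u\<in>C. (\<Sum>i<n. u i * v i) = 0}"

definition perm_code :: "(nat \<Rightarrow> nat) \<Rightarrow> (nat \<Rightarrow> 'r) set \<Rightarrow> (nat \<Rightarrow> 'r) set" where
  "perm_code \<sigma> C = (\<lambda>u. \<lambda>i. u (\<sigma> i)) ` C"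

section \<open>Complete joint Jacobi polynomial, as a function of the variables x_a\<close>

definition hcount :: "nat \<Rightarrow> (nat \<Rightarrow> 'r) \<Rightarrow> (nat \<Rightarrow> 'r) \<Rightarrow> (nat \<Rightarrow> 'r) \<Rightarrow> 'r \<times> 'r \<times> 'r \<Rightarrow> nat" where
  "hcount n u v w a = card {i \<in> {0..<n}. (u i, v i, w i) = a}"

definition Jac :: "nat \<Rightarrow> (nat \<Rightarrow> 'r::finite) set \<Rightarrow> (nat \<Rightarrow> 'r) set \<Rightarrow> (nat \<Rightarrow> 'r)
                   \<Rightarrow> ('r \<times> 'r \<times> 'r \<Rightarrow> complex) \<Rightarrow> complex" where
  "Jac n C D w x = (\<Sum>u\<in>C. \<Sum>v\<in>D. \<Prod>a\<in>UNIV. x a ^ hcount n u v w a)"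

definition Jac_av :: "nat \<Rightarrow> (nat \<Rightarrow> 'r::finite) set \<Rightarrow> (nat \<Rightarrow> 'r) set \<Rightarrow> (nat \<Rightarrow> 'r)
                   \<Rightarrow> ('r \<times> 'r \<times> 'r \<Rightarrow> complex) \<Rightarrow> complex" where
  "Jac_av n C D w x = (1 / of_nat (fact n)) *
     (\<Sum>\<sigma>\<in>{\<sigma>. \<sigma> permutes {0..<n}}. Jac n (perm_code \<sigma> C) D w x)"

end

theory Submission
  imports Defs "HOL-Library.FuncSet"
begin


lemma finite_vecs: "finite (vecs n :: (nat \<Rightarrow> 'r::{zero,finite}) set)"
proof -
  have "vecs n \<subseteq> (\<lambda>e i. if i < n then e i else 0) ` (PiE {..<n} (\<lambda>_. (UNIV::'r set)))"
  proof
    fix v :: "nat \<Rightarrow> 'r" assume v: "v \<in> vecs n"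
    have "v = (\<lambda>i. if i < n then restrict v {..<n} i else 0)"
      using v by (auto simp: vecs_def fun_eq_iff)
    moreover have "restrict v {..<n} \<in> PiE {..<n} (\<lambda>_. UNIV)" by auto
    ultimately show "v \<in> (\<lambda>e i. if i < n then e i else 0) ` (PiE {..<n} (\<lambda>_. (UNIV::'r set)))"
      by blast
  qed
  moreover have "finite (PiE {..<n} (\<lambda>_. (UNIV::'r set)))" by (simp add: finite_PiE)
  ultimately show ?thesis by (meson finite_surj)
qed

lemma sum_vecs_prod:
  fixes g :: "nat \<Rightarrow> 'r::{zero,finite} \<Rightarrow> 'c::comm_semiring_1"
  shows "(\<Sum>v\<in>vecs n. \<Prod>i<n. g i (v i)) = (\<Prod>i<n. \<Sum>b\<in>UNIV. g i b)"
proof -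
  have "(\<Prod>i<n. \<Sum>b\<in>UNIV. g i b) = (\<Sum>e\<in>PiE {..<n} (\<lambda>_. UNIV). \<Prod>i<n. g i (e i))"
    by (rule prod_sum_PiE) auto
  also have "\<dots> = (\<Sum>v\<in>vecs n. \<Prod>i<n. g i (v i))"
  proof (rule sum.reindex_bij_witness[where i = "\<lambda>v. restrict v {..<n}"
        and j = "\<lambda>e i. if i < n then e i else 0"])
    fix v :: "nat \<Rightarrow> 'r" assume "v \<in> vecs n"
    then show "(\<lambda>i. if i < n then restrict v {..<n} i else 0) = v"
      by (auto simp: vecs_def fun_eq_iff)
  next
    fix v :: "nat \<Rightarrow> 'r" assume "v \<in> vecs n"
    then show "restrict v {..<n} \<in> PiE {..<n} (\<lambda>_. UNIV)" by auto
  next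
    fix e :: "nat \<Rightarrow> 'r" assume "e \<in> PiE {..<n} (\<lambda>_. UNIV)"
    then show "restrict (\<lambda>i. if i < n then e i else 0) {..<n} = e"
      by (auto simp: fun_eq_iff PiE_def extensional_def)
  next
    fix e :: "nat \<Rightarrow> 'r" assume "e \<in> PiE {..<n} (\<lambda>_. UNIV)"
    then show "(\<lambda>i. if i < n then e i else 0) \<in> vecs n" by (auto simp: vecs_def)
  next
    fix e :: "nat \<Rightarrow> 'r" assume "e \<in> PiE {..<n} (\<lambda>_. UNIV)"
    then show "(\<Prod>i<n. g i ((\<lambda>i. if i < n then e i else 0) i)) = (\<Prod>i<n. g i (e i))"
      by simp
  qed
  finally show ?thesis by simp
qed

lemma prod_hcount:
  fixes x :: "'r::finite \<times> 'r \<times> 'r \<Rightarrow> 'c::comm_monoid_mult"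
  shows "(\<Prod>a\<in>UNIV. x a ^ hcount n u v w a) = (\<Prod>i<n. x (u i, v i, w i))"
proof -
  let ?g = "\<lambda>i. (u i, v i, w i)"
  have "(\<Prod>i<n. x (?g i)) = (\<Prod>a\<in>?g ` {..<n}. \<Prod>i\<in>{i. i \<in> {..<n} \<and> ?g i = a}. x (?g i))"
    by (rule prod.image_gen) simp
  also have "\<dots> = (\<Prod>a\<in>?g ` {..<n}. x a ^ hcount n u v w a)"
  proof (rule prod.cong[OF refl])
    fix a assume "a \<in> ?g ` {..<n}"
    have "(\<Prod>i\<in>{i. i \<in> {..<n} \<and> ?g i = a}. x (?g i)) = (\<Prod>i\<in>{i. i \<in> {..<n} \<and> ?g i = a}. x a)"
      by (rule prod.cong) auto
    also have "\<dots> = x a ^ card {i. i \<in> {..<n} \<and> ?g i = a}" by simp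
    also have "{i. i \<in> {..<n} \<and> ?g i = a} = {i \<in> {0..<n}. (u i, v i, w i) = a}" by auto
    finally show "(\<Prod>i\<in>{i. i \<in> {..<n} \<and> ?g i = a}. x (?g i)) = x a ^ hcount n u v w a"
      by (simp add: hcount_def)
  qed
  also have "\<dots> = (\<Prod>a\<in>UNIV. x a ^ hcount n u v w a)"
  proof (rule prod.mono_neutral_left)
    show "\<forall>a\<in>UNIV - ?g ` {..<n}. x a ^ hcount n u v w a = 1"
    proof
      fix a assume "a \<in> UNIV - ?g ` {..<n}"
      then have "{i \<in> {0..<n}. (u i, v i, w i) = a} = {}" by auto
      then have "hcount n u v w a = 0" unfolding hcount_def by (metis card.empty)
      then show "x a ^ hcount n u v w a = 1" by simp
    qed
  qed auto
  finally show ?thesis by simp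
qed

lemma Jac_alt: "Jac n C D w x = (\<Sum>u\<in>C. \<Sum>v\<in>D. \<Prod>i<n. x (u i, v i, w i))"
  unfolding Jac_def prod_hcount ..

definition good_chi :: "('r::comm_ring_1 \<Rightarrow> complex) \<Rightarrow> bool" where
  "good_chi chi \<longleftrightarrow> chi 0 = 1 \<and> (\<forall>a b. chi (a + b) = chi a * chi b) \<and>
     (\<forall>c. c \<noteq> 0 \<longrightarrow> (\<exists>t. chi (t * c) \<noteq> 1))"

lemma chi_sum:
  assumes "good_chi chi" "finite I"
  shows "chi (\<Sum>i\<in>I. f i) = (\<Prod>i\<in>I. chi (f i))"
  using assms(2) by (induction rule: finite_induct) (use assms(1) in \<open>auto simp: good_chi_def\<close>)

lemma linear_code_finite: "linear_code n (E :: (nat \<Rightarrow> 'r::{comm_ring_1,finite}) set) \<Longrightarrow> finite E"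
  unfolding linear_code_def using finite_vecs finite_subset by blast

lemma linear_code_card: "linear_code n (E :: (nat \<Rightarrow> 'r::{comm_ring_1,finite}) set) \<Longrightarrow> card E \<noteq> 0"
  using linear_code_finite[of n E] unfolding linear_code_def by auto

lemma lin_sc: "linear_code n E \<Longrightarrow> u \<in> E \<Longrightarrow> (\<lambda>i. c * u i) \<in> E"
  unfolding linear_code_def by blast

lemma lin_add: "linear_code n E \<Longrightarrow> u \<in> E \<Longrightarrow> v \<in> E \<Longrightarrow> (\<lambda>i. u i + v i) \<in> E"
  unfolding linear_code_def by blast

lemma char_sum:
  fixes E :: "(nat \<Rightarrow> 'r::{comm_ring_1,finite}) set"
  assumes chi: "good_chi chi" and E: "linear_code n E" and v: "v \<in> vecs n"
  shows "(\<Sum>d\<in>E. chi (\<Sum>i<n. d i * v i)) = (if v \<in> dual_code n E then of_nat (card E) else 0)"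
proof (cases "v \<in> dual_code n E")
  case True
  then have "\<forall>d\<in>E. (\<Sum>i<n. d i * v i) = 0" by (auto simp: dual_code_def lessThan_atLeast0)
  with True show ?thesis using chi by (simp add: good_chi_def)
next
  case False
  then obtain u where u: "u \<in> E" and s: "(\<Sum>i<n. u i * v i) \<noteq> 0"
    using v by (auto simp: dual_code_def lessThan_atLeast0)
  define s where "s = (\<Sum>i<n. u i * v i)"
  obtain t where t: "chi (t * s) \<noteq> 1" using chi s unfolding good_chi_def s_def by blast
  define d0 where "d0 = (\<lambda>i. t * u i)"
  have d0E: "d0 \<in> E" unfolding d0_def by (rule lin_sc[OF E u])
  have negE: "(\<lambda>i. d i + - 1 * d0 i) \<in> E" if "d \<in> E" for d
    by (rule lin_add[OF E that lin_sc[OF E d0E]])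
  have addE: "(\<lambda>i. d i + d0 i) \<in> E" if "d \<in> E" for d
    by (rule lin_add[OF E that d0E])
  let ?S = "(\<Sum>d\<in>E. chi (\<Sum>i<n. d i * v i))"
  have "?S = (\<Sum>d\<in>E. chi (\<Sum>i<n. (d i + d0 i) * v i))"
  proof (rule sum.reindex_bij_witness[where j = "\<lambda>d i. d i + - 1 * d0 i" and i = "\<lambda>d i. d i + d0 i"])
    fix d assume "d \<in> E"
    show "(\<lambda>i. (\<lambda>i. d i + - 1 * d0 i) i + d0 i) = d" by simp
    show "(\<lambda>i. d i + - 1 * d0 i) \<in> E" by (rule negE) fact
    show "(\<lambda>i. (\<lambda>i. d i + d0 i) i + - 1 * d0 i) = d" by simp
    show "(\<lambda>i. d i + d0 i) \<in> E" by (rule addE) fact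
    show "chi (\<Sum>i<n. ((\<lambda>i. (\<lambda>i. d i + - 1 * d0 i) i + d0 i) i) * v i) = chi (\<Sum>i<n. d i * v i)" by simp
  qed
  also have "\<dots> = (\<Sum>d\<in>E. chi (\<Sum>i<n. d i * v i) * chi (t * s))"
  proof (rule sum.cong[OF refl])
    fix d assume "d \<in> E"
    have "(\<Sum>i<n. (d i + d0 i) * v i) = (\<Sum>i<n. d i * v i + t * (u i * v i))"
      by (rule sum.cong) (simp_all add: d0_def distrib_right mult.assoc)
    also have "\<dots> = (\<Sum>i<n. d i * v i) + t * s"
      by (simp only: sum.distrib sum_distrib_left s_def)
    finally show "chi (\<Sum>i<n. (d i + d0 i) * v i) = chi (\<Sum>i<n. d i * v i) * chi (t * s)"
      using chi by (simp add: good_chi_def)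
  qed
  also have "\<dots> = ?S * chi (t * s)" by (simp add: sum_distrib_right)
  finally have "?S * (1 - chi (t * s)) = 0" by (simp add: algebra_simps)
  with t have "?S = 0" by simp
  with False show ?thesis by simp
qed

lemma core:
  fixes E :: "(nat \<Rightarrow> 'r::{comm_ring_1,finite}) set" and g :: "nat \<Rightarrow> 'r \<Rightarrow> complex"
  assumes chi: "good_chi chi" and E: "linear_code n E"
  shows "(\<Sum>v\<in>dual_code n E. \<Prod>i<n. g i (v i)) =
     (1 / of_nat (card E)) * (\<Sum>d\<in>E. \<Prod>i<n. \<Sum>b\<in>UNIV. chi (d i * b) * g i b)"
proof -
  have finE: "finite E" using E by (rule linear_code_finite)
  have "(\<Sum>d\<in>E. \<Prod>i<n. \<Sum>b\<in>UNIV. chi (d i * b) * g i b)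
      = (\<Sum>d\<in>E. \<Sum>v\<in>vecs n. \<Prod>i<n. chi (d i * v i) * g i (v i))"
    by (rule sum.cong[OF refl], rule sum_vecs_prod[symmetric])
  also have "\<dots> = (\<Sum>d\<in>E. \<Sum>v\<in>vecs n. chi (\<Sum>i<n. d i * v i) * (\<Prod>i<n. g i (v i)))"
    by (intro sum.cong refl) (simp only: chi_sum[OF chi finite_lessThan] prod.distrib)
  also have "\<dots> = (\<Sum>v\<in>vecs n. (\<Sum>d\<in>E. chi (\<Sum>i<n. d i * v i)) * (\<Prod>i<n. g i (v i)))"
    by (simp only: sum_distrib_right) (rule sum.swap)
  also have "\<dots> = (\<Sum>v\<in>vecs n. (if v \<in> dual_code n E then of_nat (card E) * (\<Prod>i<n. g i (v i)) else 0))"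
    by (rule sum.cong[OF refl]) (simp add: char_sum[OF chi E])
  also have "\<dots> = (\<Sum>v\<in>{v \<in> vecs n. v \<in> dual_code n E}. of_nat (card E) * (\<Prod>i<n. g i (v i)))"
    by (rule sum.inter_filter[OF finite_vecs, symmetric])
  also have "{v \<in> vecs n. v \<in> dual_code n E} = dual_code n E" by (auto simp: dual_code_def)
  finally have "(\<Sum>d\<in>E. \<Prod>i<n. \<Sum>b\<in>UNIV. chi (d i * b) * g i b) =
     of_nat (card E) * (\<Sum>v\<in>dual_code n E. \<Prod>i<n. g i (v i))"
    by (simp only: sum_distrib_left)
  then show ?thesis using linear_code_card[OF E] by simp
qed



lemma jac_i:
  assumes chi: "good_chi chi" and D: "linear_code n D"
  shows "Jac n C (dual_code n D) w x =
    (1 / of_nat (card D)) * Jac n C D w (\<lambda>(a1, a2, a3). \<Sum>b\<in>UNIV. chi (a2 * b) * x (a1, b, a3))"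
proof -
  have "Jac n C (dual_code n D) w x = (\<Sum>u\<in>C. (1 / of_nat (card D)) *
      (\<Sum>d\<in>D. \<Prod>i<n. \<Sum>b\<in>UNIV. chi (d i * b) * x (u i, b, w i)))"
    unfolding Jac_alt
    by (rule sum.cong[OF refl], rule core[OF chi D, where g = "\<lambda>i b. x (u i, b, w i)" for u])
  then show ?thesis unfolding Jac_alt by (simp add: sum_distrib_left)
qed

lemma jac_ii:
  assumes chi: "good_chi chi" and C: "linear_code n C"
  shows "Jac n (dual_code n C) D w x =
    (1 / of_nat (card C)) * Jac n C D w (\<lambda>(a1, a2, a3). \<Sum>b\<in>UNIV. chi (a1 * b) * x (b, a2, a3))"
proof -
  have "Jac n (dual_code n C) D w x = (\<Sum>v\<in>D. \<Sum>u\<in>dual_code n C. \<Prod>i<n. x (u i, v i, w i))"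
    unfolding Jac_alt by (rule sum.swap)
  also have "\<dots> = (\<Sum>v\<in>D. (1 / of_nat (card C)) *
      (\<Sum>c\<in>C. \<Prod>i<n. \<Sum>b\<in>UNIV. chi (c i * b) * x (b, v i, w i)))"
    by (rule sum.cong[OF refl], rule core[OF chi C, where g = "\<lambda>i b. x (b, v i, w i)" for v])
  also have "\<dots> = (1 / of_nat (card C)) *
      (\<Sum>c\<in>C. \<Sum>v\<in>D. \<Prod>i<n. \<Sum>b\<in>UNIV. chi (c i * b) * x (b, v i, w i))"
    by (simp add: sum_distrib_left sum.swap[of _ D])
  finally show ?thesis unfolding Jac_alt by simp
qed

lemma perm_linear:
  assumes s: "\<sigma> permutes {0..<n}" and C: "linear_code n C"
  shows "linear_code n (perm_code \<sigma> C)"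
proof -
  have fx: "\<sigma> i = i" if "n \<le> i" for i using permutes_not_in[OF s] that by auto
  have sub: "perm_code \<sigma> C \<subseteq> vecs n"
  proof
    fix v assume "v \<in> perm_code \<sigma> C"
    then obtain u where u: "u \<in> C" "v = (\<lambda>i. u (\<sigma> i))" unfolding perm_code_def by blast
    have "u \<in> vecs n" using C u(1) unfolding linear_code_def by blast
    then show "v \<in> vecs n" using fx unfolding u(2) vecs_def by simp
  qed
  have z: "(\<lambda>_. 0) \<in> perm_code \<sigma> C"
  proof -
    have "(\<lambda>_. 0) \<in> C" using C unfolding linear_code_def by blast
    then have "(\<lambda>i. (\<lambda>_. 0) (\<sigma> i)) \<in> perm_code \<sigma> C" unfolding perm_code_def by (rule imageI)
    then show ?thesis by simp
  qed
  have ad: "(\<lambda>i. u i + v i) \<in> perm_code \<sigma> C" if uu: "u \<in> perm_code \<sigma> C" "v \<in> perm_code \<sigma> C" for u v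
  proof -
    obtain u' where u': "u' \<in> C" "u = (\<lambda>i. u' (\<sigma> i))" using uu(1) unfolding perm_code_def by blast
    obtain v' where v': "v' \<in> C" "v = (\<lambda>i. v' (\<sigma> i))" using uu(2) unfolding perm_code_def by blast
    have "(\<lambda>i. u' i + v' i) \<in> C" by (rule lin_add[OF C u'(1) v'(1)])
    then have "(\<lambda>i. (\<lambda>i. u' i + v' i) (\<sigma> i)) \<in> perm_code \<sigma> C" unfolding perm_code_def by (rule imageI)
    then show ?thesis unfolding u' v' by simp
  qed
  have sc: "(\<lambda>i. c * u i) \<in> perm_code \<sigma> C" if uu: "u \<in> perm_code \<sigma> C" for u c
  proof -
    obtain u' where u': "u' \<in> C" "u = (\<lambda>i. u' (\<sigma> i))" using uu unfolding perm_code_def by blast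
    have "(\<lambda>i. c * u' i) \<in> C" by (rule lin_sc[OF C u'(1)])
    then have "(\<lambda>i. (\<lambda>i. c * u' i) (\<sigma> i)) \<in> perm_code \<sigma> C" unfolding perm_code_def by (rule imageI)
    then show ?thesis unfolding u' by simp
  qed
  show ?thesis unfolding linear_code_def using sub z ad sc by blast
qed

lemma perm_card:
  assumes s: "\<sigma> permutes {0..<n}"
  shows "card (perm_code \<sigma> C) = card C"
proof -
  have "inj_on (\<lambda>u i. u (\<sigma> i)) C"
  proof (rule inj_onI)
    fix u v :: "nat \<Rightarrow> 'a" assume "(\<lambda>i. u (\<sigma> i)) = (\<lambda>i. v (\<sigma> i))"
    then have "u (\<sigma> (inv \<sigma> i)) = v (\<sigma> (inv \<sigma> i))" for i by metis
    then show "u = v" using permutes_inverses(1)[OF s] by (simp add: fun_eq_iff)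
  qed
  then show ?thesis unfolding perm_code_def by (rule card_image)
qed

lemma perm_dual:
  fixes C :: "(nat \<Rightarrow> 'r::comm_ring_1) set"
  assumes s: "\<sigma> permutes {0..<n}"
  shows "perm_code \<sigma> (dual_code n C) = dual_code n (perm_code \<sigma> C)"
proof -
  have s': "\<sigma> permutes {..<n}" using s by (simp add: lessThan_atLeast0)
  have key: "(\<Sum>i<n. u (\<sigma> i) * v (\<sigma> i)) = (\<Sum>i<n. u i * v i)" for u v :: "nat \<Rightarrow> 'r"
    using sum.permute[OF s', of "\<lambda>i. u i * v i"] by (simp add: comp_def)
  have fix_out: "\<sigma> i = i" if "n \<le> i" for i using permutes_not_in[OF s] that by auto
  have ifix_out: "inv \<sigma> i = i" if "n \<le> i" for i
    using permutes_not_in[OF permutes_inv[OF s]] that by auto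
  show ?thesis
  proof
    show "perm_code \<sigma> (dual_code n C) \<subseteq> dual_code n (perm_code \<sigma> C)"
    proof
      fix v assume "v \<in> perm_code \<sigma> (dual_code n C)"
      then obtain v' where v': "v' \<in> dual_code n C" and v: "v = (\<lambda>i. v' (\<sigma> i))"
        unfolding perm_code_def by blast
      have "v \<in> vecs n" using v' fix_out unfolding v vecs_def dual_code_def by auto
      moreover have "(\<Sum>i<n. u' i * v i) = 0" if uu: "u' \<in> perm_code \<sigma> C" for u'
      proof -
        obtain u where u: "u \<in> C" "u' = (\<lambda>i. u (\<sigma> i))" using uu unfolding perm_code_def by blast
        have "(\<Sum>i<n. u' i * v i) = (\<Sum>i<n. u i * v' i)" unfolding u v by (rule key)
        also have "\<dots> = 0" using v' u unfolding dual_code_def by (auto simp: lessThan_atLeast0)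
        finally show ?thesis .
      qed
      ultimately show "v \<in> dual_code n (perm_code \<sigma> C)"
        unfolding dual_code_def by (auto simp: lessThan_atLeast0)
    qed
  next
    show "dual_code n (perm_code \<sigma> C) \<subseteq> perm_code \<sigma> (dual_code n C)"
    proof
      fix v assume v: "v \<in> dual_code n (perm_code \<sigma> C)"
      define v' where "v' = (\<lambda>i. v (inv \<sigma> i))"
      have vv: "v = (\<lambda>i. v' (\<sigma> i))" unfolding v'_def
        using permutes_inverses(2)[OF s] by simp
      have "v' \<in> vecs n" using v ifix_out unfolding v'_def vecs_def dual_code_def by auto
      moreover have "(\<Sum>i<n. u i * v' i) = 0" if "u \<in> C" for u
      proof -
        have "(\<Sum>i<n. u i * v' i) = (\<Sum>i<n. u (\<sigma> i) * v' (\<sigma> i))" by (rule key[symmetric])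
        also have "\<dots> = (\<Sum>i<n. u (\<sigma> i) * v i)" unfolding vv ..
        also have "\<dots> = 0" using v that unfolding dual_code_def perm_code_def
          by (auto simp: lessThan_atLeast0)
        finally show ?thesis .
      qed
      ultimately have "v' \<in> dual_code n C" unfolding dual_code_def by (auto simp: lessThan_atLeast0)
      then show "v \<in> perm_code \<sigma> (dual_code n C)" unfolding perm_code_def vv by blast
    qed
  qed
qed



lemma char_exists:
  "\<exists>m>0. of_nat m = (0::'r::{comm_ring_1,finite}) \<and> (\<forall>j. 0 < j \<and> j < m \<longrightarrow> of_nat j \<noteq> (0::'r))"
proof -
  have "\<not> inj (of_nat :: nat \<Rightarrow> 'r)"
  proof
    assume "inj (of_nat :: nat \<Rightarrow> 'r)"
    then have "finite (UNIV :: nat set)" using finite_imageD[of "of_nat :: nat \<Rightarrow> 'r" UNIV] by simp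
    then show False by simp
  qed
  then obtain i j where ij: "i \<noteq> j" "(of_nat i :: 'r) = of_nat j" unfolding inj_def by blast
  have "\<exists>m>0. of_nat m = (0::'r)"
  proof (cases "i < j")
    case True
    then have "(of_nat (j - i) :: 'r) = of_nat j - of_nat i" by (simp add: of_nat_diff)
    with ij True show ?thesis by (intro exI[of _ "j - i"]) auto
  next
    case False
    then have "(of_nat (i - j) :: 'r) = of_nat i - of_nat j" by (simp add: of_nat_diff)
    with ij False show ?thesis by (intro exI[of _ "i - j"]) auto
  qed
  then have ex: "\<exists>m. 0 < m \<and> of_nat m = (0::'r)" by blast
  define m where "m = (LEAST m. 0 < m \<and> of_nat m = (0::'r))"
  have m: "0 < m \<and> of_nat m = (0::'r)" unfolding m_def by (rule LeastI_ex[OF ex])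
  have "\<forall>j. 0 < j \<and> j < m \<longrightarrow> of_nat j \<noteq> (0::'r)"
    using not_less_Least unfolding m_def by blast
  with m show ?thesis by blast
qed

lemma of_nat_mod_char:
  assumes "of_nat m = (0::'r::comm_semiring_1)"
  shows "(of_nat (x mod m) :: 'r) = of_nat x"
proof -
  have "(of_nat x :: 'r) = of_nat (x div m * m + x mod m)" by simp
  also have "\<dots> = of_nat (x mod m)" using assms by (simp only: of_nat_add of_nat_mult) simp
  finally show ?thesis by simp
qed

lemma of_nat_inj_char:
  assumes "\<forall>j. 0 < j \<and> j < m \<longrightarrow> of_nat j \<noteq> (0::'r::comm_ring_1)"
    and "i < m" "j < m" "(of_nat i :: 'r) = of_nat j"
  shows "i = j"
proof (rule ccontr)
  assume "i \<noteq> j"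
  show False
  proof (cases "i < j")
    case True
    then have "(of_nat (j - i) :: 'r) = 0" using assms(4) by (simp add: of_nat_diff)
    moreover have "j - i < m" using assms(3) by simp
    ultimately show False using assms(1)[rule_format, of "j - i"] True by auto
  next
    case False
    with \<open>i \<noteq> j\<close> have "j < i" by simp
    then have "(of_nat (i - j) :: 'r) = 0" using assms(4) by (simp add: of_nat_diff)
    moreover have "i - j < m" using assms(2) by simp
    ultimately show False using assms(1)[rule_format, of "i - j"] \<open>j < i\<close> by auto
  qed
qed

lemma power_mod_root:
  assumes "(z::complex) ^ k = 1"
  shows "z ^ (x mod k) = z ^ x"
proof -
  have "z ^ x = z ^ (x div k * k + x mod k)" by simp
  also have "\<dots> = (z ^ k) ^ (x div k) * z ^ (x mod k)" by (simp only: power_add mult.commute[of "x div k" k] power_mult)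
  finally show ?thesis using assms by simp
qed

lemma Zk_good:
  fixes chi :: "'r::{comm_ring_1,finite} \<Rightarrow> complex"
  assumes Z: "Zk_character k z chi"
  shows "good_chi chi"
proof -
  from Z have k2: "2 \<le> k" and card: "card (UNIV :: 'r set) = k" and sj: "surj (of_nat :: nat \<Rightarrow> 'r)"
    and zk: "z ^ k = 1" and zprim: "\<forall>j. 0 < j \<and> j < k \<longrightarrow> z ^ j \<noteq> 1" and chi: "chi = chi_Zk k z"
    unfolding Zk_character_def prim_root_unity_def by auto
  obtain m where m0: "0 < m" and mz: "of_nat m = (0::'r)" and mmin: "\<forall>j. 0 < j \<and> j < m \<longrightarrow> of_nat j \<noteq> (0::'r)"
    using char_exists by blast
  have "(of_nat :: nat \<Rightarrow> 'r) ` {..<m} = UNIV"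
  proof -
    have "y \<in> (of_nat :: nat \<Rightarrow> 'r) ` {..<m}" for y
    proof -
      obtain x where "y = of_nat x" using sj by (metis surj_def)
      then have "y = of_nat (x mod m)" using of_nat_mod_char[OF mz] by simp
      then show ?thesis using m0 by auto
    qed
    then show ?thesis by blast
  qed
  moreover have "inj_on (of_nat :: nat \<Rightarrow> 'r) {..<m}"
    by (rule inj_onI) (use of_nat_inj_char[OF mmin] in auto)
  ultimately have "card (UNIV :: 'r set) = m" by (metis card_image card_lessThan)
  with card have mk: "m = k" by simp
  have chi_of: "chi (of_nat x) = z ^ x" for x
  proof -
    have "(THE j. j < k \<and> of_nat j = (of_nat x :: 'r)) = x mod k"
    proof (rule the_equality)
      show "x mod k < k \<and> of_nat (x mod k) = (of_nat x :: 'r)"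
        using of_nat_mod_char[OF mz] mk m0 by auto
    next
      fix j assume "j < k \<and> of_nat j = (of_nat x :: 'r)"
      then show "j = x mod k" using of_nat_mod_char[OF mz, of x] of_nat_inj_char[OF mmin, of j "x mod k"] mk m0
        by auto
    qed
    then show ?thesis unfolding chi chi_Zk_def using power_mod_root[OF zk] by simp
  qed
  have ex: "\<exists>x. a = of_nat x" for a :: 'r using sj by (metis surj_def)
  have "chi 0 = 1" using chi_of[of 0] by simp
  moreover have "chi (a + b) = chi a * chi b" for a b
  proof -
    obtain x y where "a = of_nat x" "b = of_nat y" using ex by blast
    then show ?thesis using chi_of[of "x + y"] chi_of[of x] chi_of[of y] by (simp add: power_add)
  qed
  moreover have "\<exists>t. chi (t * c) \<noteq> 1" if c: "c \<noteq> 0" for c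
  proof -
    obtain x where x: "c = of_nat x" using ex by blast
    then have c': "c = of_nat (x mod k)" using of_nat_mod_char[OF mz] mk by simp
    have "x mod k \<noteq> 0"
    proof
      assume "x mod k = 0"
      then have "c = 0" using c' by simp
      with c show False by simp
    qed
    moreover have "x mod k < k" using k2 by simp
    ultimately have "z ^ (x mod k) \<noteq> 1" using zprim by simp
    then have "chi (1 * c) \<noteq> 1" using chi_of[of "x mod k"] c' by simp
    then show ?thesis by blast
  qed
  ultimately show ?thesis unfolding good_chi_def by blast
qed



lemma Fq_good:
  fixes chi :: "'r::{comm_ring_1,finite} \<Rightarrow> complex"
  assumes Fq: "Fq_character p f lam z chi"
  shows "good_chi chi"
proof -
  from Fq have field: "\<And>x::'r. x \<noteq> 0 \<Longrightarrow> \<exists>y. x * y = 1" and pp: "prime p"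
    and pz: "of_nat p = (0::'r)" and f0: "0 < f" and card: "card (UNIV :: 'r set) = p ^ f"
    and zp: "z ^ p = 1" and zprim: "\<forall>j. 0 < j \<and> j < p \<longrightarrow> z ^ j \<noteq> 1"
    and chi: "chi = chi_Fq p f lam z"
    unfolding Fq_character_def is_field_ring_def prim_root_unity_def by auto
  from Fq obtain P where PI: "primitive_irreducible p f P" and Plam: "poly P lam = 0"
    unfolding Fq_character_def by blast
  have p2: "2 \<le> p" using pp by (rule prime_ge_2_nat)
  have nzd: "y = 0" if H: "x * y = 0" "x \<noteq> 0" for x y :: 'r
  proof -
    obtain x' where "x * x' = 1" using field H(2) by blast
    then have "y = x' * (x * y)" by (metis mult.assoc mult.commute mult_1)
    with H(1) show ?thesis by simp
  qed
  have pow_nz: "x ^ i \<noteq> 0" if "x \<noteq> 0" for x :: 'r and i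
    by (induction i) (use nzd that in auto)
  have modp: "(of_nat (x mod p) :: 'r) = of_nat x" for x using of_nat_mod_char[OF pz] .
  obtain m where m0: "0 < m" and mz: "of_nat m = (0::'r)" and mmin: "\<forall>j. 0 < j \<and> j < m \<longrightarrow> of_nat j \<noteq> (0::'r)"
    using char_exists by blast
  have "(of_nat (p mod m) :: 'r) = 0" using of_nat_mod_char[OF mz, of p] pz by simp
  then have "p mod m = 0" using mmin m0 by (meson mod_less_divisor neq0_conv)
  then have "m dvd p" by auto
  then have "m = 1 \<or> m = p" using pp by (simp add: prime_nat_iff)
  moreover have "m \<noteq> 1"
  proof
    assume "m = 1"
    then have "(1::'r) = 0" using mz by simp
    then have "\<forall>x::'r. x = 0" by (metis mult_1 mult_zero_left)
    then have U: "(UNIV :: 'r set) = {0}" by auto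
    have c1: "card (UNIV :: 'r set) = 1" unfolding U by simp
    have "p ^ f = 1" using c1 card by simp
    then show False using p2 f0 by simp
  qed
  ultimately have mp: "m = p" by simp
  have pmin: "\<forall>j. 0 < j \<and> j < p \<longrightarrow> of_nat j \<noteq> (0::'r)" using mmin mp by simp
  have one_nz: "(1::'r) \<noteq> 0" using pmin[rule_format, of 1] p2 by simp
  define N where "N = p ^ f - 1"
  have "p ^ 1 \<le> p ^ f" using f0 p2 by (intro power_increasing) auto
  then have pf2: "2 \<le> p ^ f" using p2 by simp
  have N0: "0 < N" unfolding N_def using pf2 by simp
  have lamN: "lam ^ N = 1" and lamprim: "\<forall>j. 0 < j \<and> j < N \<longrightarrow> lam ^ j \<noteq> 1"
    using PI Plam unfolding primitive_irreducible_def N_def by auto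
  have lam0: "lam \<noteq> 0"
  proof
    assume "lam = 0"
    then have "lam ^ N = 0" using N0 by (cases N) auto
    with lamN one_nz show False by simp
  qed
  have pinj: "inj_on (\<lambda>i. lam ^ i) {..<N}"
  proof (rule inj_onI)
    have aux: "False" if "i < j" "j < N" "lam ^ i = lam ^ j" for i j
    proof -
      have "lam ^ j = lam ^ i * lam ^ (j - i)" using that(1) by (simp add: power_add[symmetric])
      with that(3) have "lam ^ i * (lam ^ (j - i) - 1) = 0" by (simp add: algebra_simps)
      then have "lam ^ (j - i) = 1" using nzd pow_nz[OF lam0] by fastforce
      moreover have "0 < j - i" "j - i < N" using that by auto
      ultimately show False using lamprim by blast
    qed
    fix i j assume "i \<in> {..<N}" "j \<in> {..<N}" "lam ^ i = lam ^ j"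
    then show "i = j" using aux[of i j] aux[of j i] by (metis lessThan_iff linorder_neqE_nat)
  qed
  have allpow: "(UNIV :: 'r set) = insert 0 ((\<lambda>i. lam ^ i) ` {..<N})"
  proof (rule sym, rule card_subset_eq)
    show "finite (UNIV :: 'r set)" by simp
    show "insert 0 ((\<lambda>i. lam ^ i) ` {..<N}) \<subseteq> UNIV" by simp
    have "0 \<notin> (\<lambda>i. lam ^ i) ` {..<N}" using pow_nz[OF lam0] by auto
    then have "card (insert 0 ((\<lambda>i. lam ^ i) ` {..<N})) = Suc N"
      using card_image[OF pinj] by simp
    then show "card (insert 0 ((\<lambda>i. lam ^ i) ` {..<N})) = card (UNIV :: 'r set)"
      using card pf2 unfolding N_def by simp
  qed
  have "\<forall>i. \<exists>c. coeff P i = of_nat c"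
    using PI unfolding primitive_irreducible_def over_prime_field_def by (metis rangeE)
  then obtain g where g: "\<And>i. coeff P i = of_nat (g i)" by metis
  have degP: "degree P = f" using PI unfolding primitive_irreducible_def by simp
  have Pnz: "P \<noteq> 0" using degP f0 by auto
  define L where "L = (of_nat (g f) :: 'r)"
  have L0: "L \<noteq> 0" using Pnz degP g unfolding L_def by (metis leading_coeff_0_iff)
  have Peq: "(\<Sum>i<f. of_nat (g i) * lam ^ i) + L * lam ^ f = 0"
  proof -
    have "poly P lam = (\<Sum>i\<le>f. coeff P i * lam ^ i)" by (simp add: poly_altdef degP)
    also have "\<dots> = (\<Sum>i<Suc f. coeff P i * lam ^ i)" by (simp add: lessThan_Suc_atMost)
    also have "\<dots> = (\<Sum>i<f. of_nat (g i) * lam ^ i) + L * lam ^ f" by (simp add: g L_def)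
    finally show ?thesis using Plam by simp
  qed
  obtain h where h: "L * of_nat h = 1"
  proof -
    have "\<not> inj (\<lambda>e::nat. L ^ e)"
    proof
      assume "inj (\<lambda>e::nat. L ^ e)"
      then have "finite (UNIV :: nat set)" using finite_imageD[of "\<lambda>e::nat. L ^ e" UNIV] by simp
      then show False by simp
    qed
    then obtain a b where ab: "a \<noteq> b" "L ^ a = L ^ b" unfolding inj_def by blast
    have "\<exists>d. 0 < d \<and> L ^ d = 1"
    proof -
      have aux: "\<exists>d. 0 < d \<and> L ^ d = 1" if "a < b" "L ^ a = L ^ b" for a b
      proof -
        have "L ^ b = L ^ a * L ^ (b - a)" using that(1) by (simp add: power_add[symmetric])
        with that(2) have "L ^ a * (L ^ (b - a) - 1) = 0" by (simp add: algebra_simps)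
        then have "L ^ (b - a) = 1" using nzd pow_nz[OF L0] by fastforce
        then show ?thesis using that(1) by (intro exI[of _ "b - a"]) simp
      qed
      show ?thesis using ab aux[of a b] aux[of b a] by (metis linorder_neqE_nat)
    qed
    then obtain d where d: "0 < d" "L ^ d = 1" by blast
    have "L * of_nat (g f ^ (d - 1)) = L ^ d" using d(1) unfolding L_def
      by (simp add: of_nat_power power_Suc[symmetric])
    with d(2) have "L * of_nat (g f ^ (d - 1)) = 1" by simp
    then show ?thesis by (rule that)
  qed
  have neg1: "- 1 = (of_nat (p - 1) :: 'r)"
  proof -
    have "(of_nat (p - 1) :: 'r) + 1 = of_nat p" using p2 by (simp add: of_nat_diff)
    then show ?thesis using pz by (simp add: neg_eq_iff_add_eq_0 add.commute)
  qed
  define inS where "inS x \<longleftrightarrow> (\<exists>c. x = (\<Sum>i<f. of_nat (c i) * lam ^ i))" for x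
  have S0: "inS 0" unfolding inS_def by (intro exI[of _ "\<lambda>_. 0"]) simp
  have Sadd: "inS (a + b)" if H: "inS a" "inS b" for a b
  proof -
    obtain c c' where "a = (\<Sum>i<f. of_nat (c i) * lam ^ i)" "b = (\<Sum>i<f. of_nat (c' i) * lam ^ i)"
      using H unfolding inS_def by blast
    then have "a + b = (\<Sum>i<f. of_nat (c i + c' i) * lam ^ i)"
      by (simp add: sum.distrib[symmetric] distrib_right)
    then show ?thesis unfolding inS_def by (rule exI[of _ "\<lambda>i. c i + c' i"])
  qed
  have Ssc: "inS (of_nat k * a)" if H: "inS a" for a k
  proof -
    obtain c where "a = (\<Sum>i<f. of_nat (c i) * lam ^ i)" using H unfolding inS_def by blast
    then have "of_nat k * a = (\<Sum>i<f. of_nat (k * c i) * lam ^ i)"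
      by (simp add: sum_distrib_left mult.assoc)
    then show ?thesis unfolding inS_def by (rule exI[of _ "\<lambda>i. k * c i"])
  qed
  have Ssum: "finite A \<Longrightarrow> (\<forall>i\<in>A. inS (u i)) \<longrightarrow> inS (sum u A)" for A and u :: "nat \<Rightarrow> 'r"
    by (induction rule: finite_induct) (auto simp: S0 Sadd)
  have Spow_lt: "inS (lam ^ j)" if "j < f" for j
  proof -
    have "(\<Sum>i<f. of_nat (if i = j then 1 else 0) * lam ^ i) = (\<Sum>i<f. if i = j then lam ^ i else 0)"
      by (rule sum.cong) auto
    also have "\<dots> = lam ^ j" using that by (simp add: sum.delta)
    finally show ?thesis unfolding inS_def by (intro exI[of _ "\<lambda>i. if i = j then 1 else 0"]) simp
  qed
  have Spow_f: "inS (lam ^ f)"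
  proof -
    have Lf: "L * lam ^ f = - (\<Sum>i<f. of_nat (g i) * lam ^ i)" using Peq
      by (simp add: eq_neg_iff_add_eq_0 add.commute)
    have "lam ^ f = of_nat h * (L * lam ^ f)" using h by (metis mult.assoc mult.commute mult_1)
    also have "\<dots> = of_nat h * (- (\<Sum>i<f. of_nat (g i) * lam ^ i))" unfolding Lf ..
    also have "\<dots> = of_nat h * (of_nat (p - 1) * (\<Sum>i<f. of_nat (g i) * lam ^ i))"
      using neg1 by (metis mult_minus1)
    finally have eq: "lam ^ f = of_nat h * (of_nat (p - 1) * (\<Sum>i<f. of_nat (g i) * lam ^ i))" .
    have "inS (\<Sum>i<f. of_nat (g i) * lam ^ i)" unfolding inS_def by blast
    then show ?thesis unfolding eq by (intro Ssc)
  qed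
  have Slam: "inS (lam * a)" if H: "inS a" for a
  proof -
    obtain c where "a = (\<Sum>i<f. of_nat (c i) * lam ^ i)" using H unfolding inS_def by blast
    then have eq: "lam * a = (\<Sum>i<f. of_nat (c i) * lam ^ Suc i)"
      by (simp add: sum_distrib_left algebra_simps)
    have "\<forall>i\<in>{..<f}. inS (of_nat (c i) * lam ^ Suc i)"
    proof
      fix i assume "i \<in> {..<f}"
      then have "Suc i < f \<or> Suc i = f" by auto
      then have "inS (lam ^ Suc i)" using Spow_lt Spow_f by metis
      then show "inS (of_nat (c i) * lam ^ Suc i)" by (rule Ssc)
    qed
    then show ?thesis unfolding eq using Ssum[of "{..<f}"] by simp
  qed
  have Spow: "inS (lam ^ j)" for j
  proof (induction j)
    case 0
    then show ?case using Spow_lt[OF f0] by simp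
  next
    case (Suc j)
    then show ?case using Slam[OF Suc.IH] by simp
  qed
  have Sall: "inS a" for a
  proof -
    have "a \<in> insert 0 ((\<lambda>i. lam ^ i) ` {..<N})" using allpow by blast
    then show ?thesis using S0 Spow by auto
  qed
  define Phi where "Phi e = (\<Sum>i<f. of_nat (e i) * lam ^ i)" for e :: "nat \<Rightarrow> nat"
  define PE where "PE = PiE {..<f} (\<lambda>_. {..<p})"
  have "Phi ` PE = UNIV"
  proof -
    have "a \<in> Phi ` PE" for a
    proof -
      obtain c where c: "a = (\<Sum>i<f. of_nat (c i) * lam ^ i)" using Sall[of a] unfolding inS_def by blast
      define e where "e = restrict (\<lambda>i. c i mod p) {..<f}"
      have "e \<in> PE" unfolding e_def PE_def using p2 by auto
      moreover have "Phi e = a" unfolding c Phi_def e_def by (rule sum.cong) (auto simp: modp)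
      ultimately show ?thesis by blast
    qed
    then show ?thesis by blast
  qed
  moreover have "card PE = p ^ f" unfolding PE_def by (simp add: card_PiE)
  ultimately have injPhi: "inj_on Phi PE"
    using card by (intro eq_card_imp_inj_on) (auto simp: PE_def finite_PiE)
  have uniq: "e i = e' i" if "\<forall>i<f. e i < p" "\<forall>i<f. e' i < p" "Phi e = Phi e'" "i < f" for e e' i
  proof -
    have r: "Phi (restrict e {..<f}) = Phi e" for e unfolding Phi_def by (rule sum.cong) auto
    have "restrict e {..<f} \<in> PE" "restrict e' {..<f} \<in> PE" using that(1,2) unfolding PE_def by auto
    moreover have "Phi (restrict e {..<f}) = Phi (restrict e' {..<f})" using r that(3) by simp
    ultimately have "restrict e {..<f} = restrict e' {..<f}" using injPhi by (meson inj_onD)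
    then show ?thesis using that(4) by (metis lessThan_iff restrict_apply')
  qed
  define rep where "rep a c cs \<longleftrightarrow> c < p \<and> (\<forall>i. cs i < p) \<and>
      a = of_nat c + (\<Sum>i=1..<f. of_nat (cs i) * lam ^ i)" for a c cs
  have conv: "of_nat c + (\<Sum>i=1..<f. of_nat (cs i) * lam ^ i) = Phi (cs(0 := c))" for c cs
  proof -
    have "Phi (cs(0 := c)) = (\<Sum>i=0..<f. of_nat ((cs(0 := c)) i) * lam ^ i)"
      unfolding Phi_def by (simp add: lessThan_atLeast0)
    also have "\<dots> = of_nat c + (\<Sum>i=Suc 0..<f. of_nat ((cs(0 := c)) i) * lam ^ i)"
      using f0 by (simp add: sum.atLeast_Suc_lessThan)
    also have "(\<Sum>i=Suc 0..<f. of_nat ((cs(0 := c)) i) * lam ^ i) = (\<Sum>i=1..<f. of_nat (cs i) * lam ^ i)"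
      by (rule sum.cong) auto
    finally show ?thesis by (rule sym)
  qed
  have rep_ex: "\<exists>c cs. rep a c cs" for a
  proof -
    obtain c where c: "a = (\<Sum>i<f. of_nat (c i) * lam ^ i)" using Sall[of a] unfolding inS_def by blast
    define e where "e i = c i mod p" for i
    have "a = Phi e" unfolding c Phi_def e_def by (simp add: modp)
    also have "e = (e(0 := e 0))" by simp
    finally have "a = of_nat (e 0) + (\<Sum>i=1..<f. of_nat (e i) * lam ^ i)" using conv by metis
    moreover have "\<forall>i. e i < p" using p2 unfolding e_def by auto
    ultimately show ?thesis unfolding rep_def by blast
  qed
  have rep_un: "c = c'" if "rep a c cs" "rep a c' cs'" for a c c' cs cs'
  proof -
    have "Phi (cs(0 := c)) = Phi (cs'(0 := c'))" using that conv unfolding rep_def by metis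
    moreover have "\<forall>i<f. (cs(0 := c)) i < p" "\<forall>i<f. (cs'(0 := c')) i < p" using that unfolding rep_def by auto
    ultimately have "(cs(0 := c)) 0 = (cs'(0 := c')) 0" using uniq f0 by blast
    then show ?thesis by simp
  qed
  have chi_rep: "chi a = z ^ c" if R: "rep a c cs" for a c cs
  proof -
    have "(THE c. c < p \<and> (\<exists>cs. (\<forall>i. cs i < p) \<and> a = of_nat c + (\<Sum>i=1..<f. of_nat (cs i) * lam ^ i))) = c"
    proof (rule the_equality)
      show "c < p \<and> (\<exists>cs. (\<forall>i. cs i < p) \<and> a = of_nat c + (\<Sum>i=1..<f. of_nat (cs i) * lam ^ i))"
        using R unfolding rep_def by blast
    next
      fix c' assume "c' < p \<and> (\<exists>cs. (\<forall>i. cs i < p) \<and> a = of_nat c' + (\<Sum>i=1..<f. of_nat (cs i) * lam ^ i))"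
      then obtain cs' where "rep a c' cs'" unfolding rep_def by blast
      then show "c' = c" using rep_un R by blast
    qed
    then show ?thesis unfolding chi chi_Fq_def by simp
  qed
  have "chi 0 = 1"
  proof -
    have "rep 0 0 (\<lambda>_. 0)" unfolding rep_def using p2 by simp
    then show ?thesis using chi_rep by fastforce
  qed
  moreover have "chi (a + b) = chi a * chi b" for a b
  proof -
    obtain c cs d ds where r1: "rep a c cs" and r2: "rep b d ds" using rep_ex by meson
    have "a + b = of_nat (c + d) + (\<Sum>i=1..<f. of_nat (cs i + ds i) * lam ^ i)"
      using r1 r2 unfolding rep_def by (simp add: sum.distrib distrib_right algebra_simps)
    also have "\<dots> = of_nat ((c + d) mod p) + (\<Sum>i=1..<f. of_nat ((cs i + ds i) mod p) * lam ^ i)"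
      by (simp add: modp)
    finally have "rep (a + b) ((c + d) mod p) (\<lambda>i. (cs i + ds i) mod p)"
      unfolding rep_def using p2 by simp
    then have "chi (a + b) = z ^ ((c + d) mod p)" by (rule chi_rep)
    also have "\<dots> = z ^ c * z ^ d" using power_mod_root[OF zp] by (simp add: power_add)
    finally show ?thesis using chi_rep[OF r1] chi_rep[OF r2] by simp
  qed
  moreover have "\<exists>t. chi (t * c) \<noteq> 1" if H: "c \<noteq> 0" for c
  proof -
    obtain y where y: "c * y = 1" using field H by blast
    have "rep 1 1 (\<lambda>_. 0)" unfolding rep_def using p2 by simp
    then have "chi 1 = z" using chi_rep by fastforce
    moreover have "z \<noteq> 1" using zprim[rule_format, of 1] p2 by simp
    ultimately have "chi (y * c) \<noteq> 1" using y by (simp add: mult.commute)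
    then show ?thesis by blast
  qed
  ultimately show ?thesis unfolding good_chi_def by blast
qed

theorem mainTheorem6:
  fixes chi :: "'r::{comm_ring_1,finite} \<Rightarrow> complex"
    and n :: nat and C D :: "(nat \<Rightarrow> 'r) set" and w :: "nat \<Rightarrow> 'r"
  assumes ring: "(\<exists>p f lam z. Fq_character p f lam z chi) \<or> (\<exists>k z. Zk_character k z chi)"
    and C: "linear_code n C" and D: "linear_code n D" and w: "w \<in> vecs n"
  shows "\<forall>x :: 'r \<times> 'r \<times> 'r \<Rightarrow> complex.
      Jac_av n C (dual_code n D) w x =
        (1 / of_nat (card D)) *
        Jac_av n C D w (\<lambda>(a1, a2, a3). \<Sum>b\<in>UNIV. chi (a2 * b) * x (a1, b, a3))
    \<and> Jac_av n (dual_code n C) D w x =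
        (1 / of_nat (card C)) *
        Jac_av n C D w (\<lambda>(a1, a2, a3). \<Sum>b\<in>UNIV. chi (a1 * b) * x (b, a2, a3))
    \<and> Jac_av n (dual_code n C) (dual_code n D) w x =
        (1 / (of_nat (card C) * of_nat (card D))) *
        Jac_av n C D w (\<lambda>(a1, a2, a3). \<Sum>b1\<in>UNIV. \<Sum>b2\<in>UNIV.
                          chi (a1 * b1 + a2 * b2) * x (b1, b2, a3))"
proof -
  have chi: "good_chi chi" using ring Zk_good Fq_good by blast
  have addc: "chi (a + b) = chi a * chi b" for a b using chi unfolding good_chi_def by blast
  show ?thesis
  proof (intro allI conjI)
    fix x :: "'r \<times> 'r \<times> 'r \<Rightarrow> complex"
    define y where "y = (\<lambda>(a1, a2, a3). \<Sum>b\<in>UNIV. chi (a2 * b) * x (a1, b, a3))"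
    define T where "T = (\<lambda>(a1, a2, a3). \<Sum>b1\<in>UNIV. \<Sum>b2\<in>UNIV.
                          chi (a1 * b1 + a2 * b2) * x (b1, b2, a3))"
    have yT0: "(\<Sum>b\<in>UNIV. chi (a1 * b) * y (b, a2, a3)) = T (a1, a2, a3)" for a1 a2 a3
    proof -
      have "(\<Sum>b\<in>UNIV. chi (a1 * b) * y (b, a2, a3)) =
          (\<Sum>b1\<in>UNIV. \<Sum>b2\<in>UNIV. chi (a1 * b1) * (chi (a2 * b2) * x (b1, b2, a3)))"
        unfolding y_def by (simp add: sum_distrib_left)
      also have "\<dots> = T (a1, a2, a3)" unfolding T_def by (simp add: addc mult.assoc)
      finally show ?thesis .
    qed
    have yT: "(\<lambda>(a1, a2, a3). \<Sum>b\<in>UNIV. chi (a1 * b) * y (b, a2, a3)) = T"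
    proof (rule ext)
      fix a :: "'r \<times> 'r \<times> 'r"
      show "(\<lambda>(a1, a2, a3). \<Sum>b\<in>UNIV. chi (a1 * b) * y (b, a2, a3)) a = T a"
        using yT0 by (cases a) simp
    qed
    let ?P = "{\<sigma>. \<sigma> permutes {0..<n}}"
    show "Jac_av n C (dual_code n D) w x =
        (1 / of_nat (card D)) *
        Jac_av n C D w (\<lambda>(a1, a2, a3). \<Sum>b\<in>UNIV. chi (a2 * b) * x (a1, b, a3))"
      unfolding Jac_av_def jac_i[OF chi D] by (simp add: sum_distrib_left mult_ac)
    have ii: "Jac n (perm_code \<sigma> (dual_code n C)) D w u =
        (1 / of_nat (card C)) * Jac n (perm_code \<sigma> C) D w (\<lambda>(a1, a2, a3). \<Sum>b\<in>UNIV. chi (a1 * b) * u (b, a2, a3))"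
      if s: "\<sigma> \<in> ?P" for \<sigma> u
    proof -
      have s': "\<sigma> permutes {0..<n}" using s by simp
      show ?thesis unfolding perm_dual[OF s'] jac_ii[OF chi perm_linear[OF s' C]] perm_card[OF s'] ..
    qed
    show "Jac_av n (dual_code n C) D w x =
        (1 / of_nat (card C)) *
        Jac_av n C D w (\<lambda>(a1, a2, a3). \<Sum>b\<in>UNIV. chi (a1 * b) * x (b, a2, a3))"
    proof -
      have "(\<Sum>\<sigma>\<in>?P. Jac n (perm_code \<sigma> (dual_code n C)) D w x) =
        (\<Sum>\<sigma>\<in>?P. (1 / of_nat (card C)) * Jac n (perm_code \<sigma> C) D w (\<lambda>(a1, a2, a3). \<Sum>b\<in>UNIV. chi (a1 * b) * x (b, a2, a3)))"
        by (rule sum.cong[OF refl]) (rule ii)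
      then show ?thesis unfolding Jac_av_def by (simp add: sum_distrib_left mult_ac)
    qed
    have iii: "Jac n (perm_code \<sigma> (dual_code n C)) (dual_code n D) w x =
        (1 / (of_nat (card C) * of_nat (card D))) * Jac n (perm_code \<sigma> C) D w T"
      if s: "\<sigma> \<in> ?P" for \<sigma>
    proof -
      have "Jac n (perm_code \<sigma> (dual_code n C)) (dual_code n D) w x =
          (1 / of_nat (card D)) * Jac n (perm_code \<sigma> (dual_code n C)) D w y"
        unfolding y_def by (rule jac_i[OF chi D])
      also have "\<dots> = (1 / of_nat (card D)) * ((1 / of_nat (card C)) * Jac n (perm_code \<sigma> C) D w T)"
        unfolding ii[OF s, of y] yT ..
      finally show ?thesis by simp
    qed
    show "Jac_av n (dual_code n C) (dual_code n D) w x =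
        (1 / (of_nat (card C) * of_nat (card D))) *
        Jac_av n C D w (\<lambda>(a1, a2, a3). \<Sum>b1\<in>UNIV. \<Sum>b2\<in>UNIV.
                          chi (a1 * b1 + a2 * b2) * x (b1, b2, a3))"
    proof -
      have "(\<Sum>\<sigma>\<in>?P. Jac n (perm_code \<sigma> (dual_code n C)) (dual_code n D) w x) =
        (\<Sum>\<sigma>\<in>?P. (1 / (of_nat (card C) * of_nat (card D))) * Jac n (perm_code \<sigma> C) D w T)"
        by (rule sum.cong[OF refl]) (rule iii)
      then show ?thesis unfolding Jac_av_def T_def[symmetric] by (simp add: sum_distrib_left mult_ac)
    qed
  qed
qed

end
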